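(* Let $M\ge 2$ and $d\ge 2$ be integers and put $m=M^{d-1}$. Consider all integer sequences of dilations $1=s_1\le s_2\le\cdots\le s_d=m$ such that $s_i=n_i s_{i-1}$ for some positive integer $n_i$, for each $i=2,\dots,d$ (i.e. each dilation divides the next). For each such sequence, let $\bar{\mathcal d}(s_1,\dots,s_d)$ be the mean recurrent length, with period $m$, of the $d$-layer dilated RNN graph with dilations $s_1,\dots,s_d$. Then among all such sequences, $\bar{\mathcal d}$ is minimized by the sequence $s_i=M^{i-1}$, $i=1,\dots,d$.
   Context: Dilated RNN graph with dilations $s_1,\dots,s_d$ (positive integers): the directed graph with vertex set $\{x_t: t\in\mathbb Z\}\cup\{c^{(l)}_t: t\in\mathbb Z,\ 1\le l\le d\}$ and edges $x_t\to c^{(1)}_t$, $c^{(l)}_t\to c^{(l+1)}_t$ for $1\le l<d$, and $c^{(l)}_t\to c^{(l)}_{t+s_l}$ for $1\le l\le d$ (these are all the edges; in particular there is no edge $c^{(l)}_t\to c^{(l)}_{t+1}$ unless $s_l=1$). The node $x_t$ is the input at time $t$ and $c^{(d)}_t$ is the output at time $t$. For $i\in\mathbb Z$ and $n\ge1$, $\mathcal d_i(n)$ denotes the number of edges of a shortest directed path from $x_i$ to $c^{(d)}_{i+n}$. The mean recurrent length with period $m$ is $\bar{\mathcal d}=\frac1m\sum_{n=1}^{m}\max_{i\in\mathbb Z}\mathcal d_i(n)$. *)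

theory Defs
  imports Complex_Main
begin

datatype vtx = X int | C nat int  (* X t = input x_t ; C l t = c^(l)_t *)

definition drnn_edges :: "nat \<Rightarrow> (nat \<Rightarrow> nat) \<Rightarrow> (vtx \<times> vtx) set" where
  "drnn_edges d s =
     {(X t, C 1 t) | t. True}
   \<union> {(C l t, C (l+1) t) | l t. 1 \<le> l \<and> l < d}
   \<union> {(C l t, C l (t + int (s l))) | l t. 1 \<le> l \<and> l \<le> d}"

definition rec_dist :: "nat \<Rightarrow> (nat \<Rightarrow> nat) \<Rightarrow> int \<Rightarrow> nat \<Rightarrow> nat" where
  "rec_dist d s i n = (LEAST k. (X i, C d (i + int n)) \<in> drnn_edges d s ^^ k)"

definition mean_rec_len :: "nat \<Rightarrow> (nat \<Rightarrow> nat) \<Rightarrow> nat \<Rightarrow> real" where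
  "mean_rec_len d s m = (1 / real m) * (\<Sum>n = 1..m. real (SUP i::int. rec_dist d s i n))"

definition admissible_dil :: "nat \<Rightarrow> nat \<Rightarrow> (nat \<Rightarrow> nat) \<Rightarrow> bool" where
  "admissible_dil d m s \<longleftrightarrow> s 1 = 1 \<and> s d = m \<and>
     (\<forall>i\<in>{2..d}. s (i-1) \<le> s i \<and> (\<exists>n::nat. n > 0 \<and> s i = n * s (i-1)))"

end

theory Submission imports Defs begin

function cst :: "nat \<Rightarrow> (nat \<Rightarrow> nat) \<Rightarrow> nat \<Rightarrow> nat \<Rightarrow> nat" where
  "cst d s l q = (if d \<le> l then q else
     q mod (s (Suc l) div s l) + cst d s (Suc l) (q div (s (Suc l) div s l)))"
  by pat_completeness auto
termination by (relation "measure (\<lambda>(d,s,l,q). d - l)") auto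

declare cst.simps[simp del]

lemma cst_top: "d \<le> l \<Longrightarrow> cst d s l q = q"
  by (simp add: cst.simps)

lemma cst_step: "l < d \<Longrightarrow> cst d s l q =
     q mod (s (Suc l) div s l) + cst d s (Suc l) (q div (s (Suc l) div s l))"
  by (subst cst.simps) simp

lemma cst_carry: "cst d s l (Suc q) \<le> Suc (cst d s l q)"
proof (induction d s l q rule: cst.induct)
  case (1 d s l q)
  show ?case
  proof (cases "d \<le> l")
    case True then show ?thesis by (simp add: cst_top)
  next
    case False
    define r where "r = s (Suc l) div s l"
    have IH: "cst d s (Suc l) (Suc (q div r)) \<le> Suc (cst d s (Suc l) (q div r))"
      using 1 False r_def by simp
    have e1: "cst d s l (Suc q) = Suc q mod r + cst d s (Suc l) (Suc q div r)"
      using False by (simp add: cst_step r_def)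
    have e2: "cst d s l q = q mod r + cst d s (Suc l) (q div r)"
      using False by (simp add: cst_step r_def)
    show ?thesis
    proof (cases "Suc q mod r = 0")
      case True
      then have "Suc q div r = Suc (q div r)" by (simp add: div_Suc)
      then show ?thesis using e1 e2 IH True by simp
    next
      case F2: False
      then have "Suc q div r = q div r" by (simp add: div_Suc)
      moreover have "Suc q mod r = Suc (q mod r)" using F2 by (simp add: mod_Suc split: if_splits)
      ultimately show ?thesis using e1 e2 by simp
    qed
  qed
qed

lemma cst_zero: "cst d s l 0 = 0"
  by (induction d s l "0::nat" rule: cst.induct) (auto simp: cst.simps)

lemma adm_pos: "admissible_dil d m s \<Longrightarrow> 1 \<le> l \<Longrightarrow> l \<le> d \<Longrightarrow> s l > 0"
proof (induction l)
  case 0 then show ?case by simp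
next
  case (Suc l)
  show ?case
  proof (cases "l = 0")
    case True then show ?thesis using Suc.prems by (simp add: admissible_dil_def)
  next
    case False
    then have "Suc l \<in> {2..d}" using Suc.prems by auto
    then obtain n where "n > 0" "s (Suc l) = n * s l"
      using Suc.prems(1) unfolding admissible_dil_def by fastforce
    moreover have "s l > 0" using Suc False by simp
    ultimately show ?thesis by simp
  qed
qed

lemma adm_step: assumes "admissible_dil d m s" "1 \<le> l" "l < d"
  shows "s (Suc l) = (s (Suc l) div s l) * s l \<and> s (Suc l) div s l > 0"
proof -
  have "Suc l \<in> {2..d}" using assms by auto
  then obtain n where n: "n > 0" "s (Suc l) = n * s l"
    using assms(1) unfolding admissible_dil_def by fastforce
  have "s l > 0" using adm_pos assms by simp
  then have "s (Suc l) div s l = n" using n by simp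
  then show ?thesis using n by simp
qed

lemma edge_iff: "(u, w) \<in> drnn_edges d s \<longleftrightarrow>
   (\<exists>t. u = X t \<and> w = C 1 t) \<or>
   (\<exists>l t. 1 \<le> l \<and> l < d \<and> u = C l t \<and> w = C (Suc l) t) \<or>
   (\<exists>l t. 1 \<le> l \<and> l \<le> d \<and> u = C l t \<and> w = C l (t + int (s l)))"
  unfolding drnn_edges_def by auto

definition goodv :: "nat \<Rightarrow> (nat\<Rightarrow>nat) \<Rightarrow> int \<Rightarrow> vtx \<Rightarrow> bool" where
  "goodv d s y v = (case v of X t \<Rightarrow> t \<le> y
     | C l t \<Rightarrow> 1 \<le> l \<and> l \<le> d \<and> t \<le> y \<and> int (s l) dvd (y - t))"

definition Dv :: "nat \<Rightarrow> (nat\<Rightarrow>nat) \<Rightarrow> int \<Rightarrow> vtx \<Rightarrow> nat" where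
  "Dv d s y v = (case v of X t \<Rightarrow> d + cst d s 1 (nat (y - t))
     | C l t \<Rightarrow> (d - l) + cst d s l (nat (y - t) div s l))"

lemma edge_good:
  assumes adm: "admissible_dil d m s" and d1: "1 \<le> d"
    and e: "(u, w) \<in> drnn_edges d s" and g: "goodv d s y w"
  shows "goodv d s y u \<and> Dv d s y u \<le> Suc (Dv d s y w)"
  using e unfolding edge_iff
proof (elim disjE exE conjE)
  fix t assume u: "u = X t" and w: "w = C 1 t"
  have s1: "s 1 = 1" using adm by (simp add: admissible_dil_def)
  show ?thesis using g d1 s1 unfolding u w goodv_def Dv_def by simp
next
  fix l t assume l: "1 \<le> l" "l < d" and u: "u = C l t" and w: "w = C (Suc l) t"
  define r where "r = s (Suc l) div s l"
  have st: "s (Suc l) = r * s l" "r > 0" using adm_step[OF adm l] r_def by auto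
  have sl: "s l > 0" using adm_pos adm l by simp
  have gw: "t \<le> y" "int (s (Suc l)) dvd (y - t)" using g unfolding w goodv_def by auto
  define z where "z = nat (y - t)"
  have yz: "y - t = int z" using gw z_def by simp
  have "s (Suc l) dvd z" using gw(2) yz by (simp add: of_nat_dvd_iff)
  then obtain k where k: "z = s (Suc l) * k" by blast
  have "z div s l = r * k" using k st sl by simp
  then have c: "cst d s l (z div s l) = cst d s (Suc l) k"
    using l st sl by (simp add: cst_step r_def[symmetric])
  have zk: "z div s (Suc l) = k" using k st sl by simp
  have "int (s l) dvd (y - t)" using yz k st by (simp add: of_nat_dvd_iff)
  then have gu: "goodv d s y u" using l gw unfolding u goodv_def by simp
  have "Dv d s y u = (d - l) + cst d s (Suc l) k" unfolding u Dv_def using c z_def by simp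
  moreover have "Dv d s y w = (d - Suc l) + cst d s (Suc l) k" unfolding w Dv_def using zk z_def by simp
  ultimately show ?thesis using gu l by simp
next
  fix l t assume l: "1 \<le> l" "l \<le> d" and u: "u = C l t" and w: "w = C l (t + int (s l))"
  have sl: "s l > 0" using adm_pos adm l by simp
  have gw: "t + int (s l) \<le> y" "int (s l) dvd (y - (t + int (s l)))" using g unfolding w goodv_def by auto
  define z where "z = nat (y - (t + int (s l)))"
  have yz: "y - (t + int (s l)) = int z" using gw z_def by simp
  have "s l dvd z" using gw(2) yz by (simp add: of_nat_dvd_iff)
  then obtain k where k: "z = s l * k" by blast
  have yz2: "y - t = int (s l * Suc k)" using yz k by simp
  have gu: "goodv d s y u" using l gw yz2 unfolding u goodv_def by simp
  have "nat (y - t) div s l = Suc k" using yz2 sl by (simp only: nat_int) simp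
  then have "Dv d s y u = (d - l) + cst d s l (Suc k)" unfolding u Dv_def by simp
  moreover have "Dv d s y w = (d - l) + cst d s l k" unfolding w Dv_def using yz k sl
    by (simp add: z_def)
  ultimately show ?thesis using gu cst_carry[of d s l k] by simp
qed

lemma lower:
  assumes adm: "admissible_dil d m s" and d1: "1 \<le> d"
  shows "(u, C d y) \<in> drnn_edges d s ^^ k \<Longrightarrow> goodv d s y u \<and> Dv d s y u \<le> k"
proof (induction k arbitrary: u)
  case 0
  then have "u = C d y" by simp
  then show ?case using d1 by (simp add: goodv_def Dv_def cst_top)
next
  case (Suc k)
  then obtain w where "(u, w) \<in> drnn_edges d s" "(w, C d y) \<in> drnn_edges d s ^^ k"
    using relpow_Suc_D2 by metis
  then show ?case using Suc.IH edge_good[OF adm d1] by fastforce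
qed


lemma horiz: "1 \<le> l \<Longrightarrow> l \<le> d \<Longrightarrow> (C l t, C l (t + int (k * s l))) \<in> drnn_edges d s ^^ k"
proof (induction k)
  case 0 then show ?case by simp
next
  case (Suc k)
  have "(C l (t + int (k * s l)), C l (t + int (k * s l) + int (s l))) \<in> drnn_edges d s"
    using Suc.prems unfolding edge_iff by blast
  moreover have "t + int (k * s l) + int (s l) = t + int (Suc k * s l)" by simp
  ultimately show ?case using Suc by (metis relpow.simps(2) relcomp.relcompI)
qed

lemma path:
  assumes adm: "admissible_dil d m s"
  shows "1 \<le> l \<Longrightarrow> l \<le> d \<Longrightarrow>
    (C l t, C d (t + int (q * s l))) \<in> drnn_edges d s ^^ ((d - l) + cst d s l q)"
proof (induction "d - l" arbitrary: l t q)
  case 0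
  then have "l = d" by simp
  then show ?case using horiz[of l d t q s] Suc_le_eq \<open>1 \<le> l\<close> by (simp add: cst_top)
next
  case (Suc n)
  then have l: "1 \<le> l" "l < d" by auto
  define r where "r = s (Suc l) div s l"
  have st: "s (Suc l) = r * s l" "r > 0" using adm_step[OF adm l] r_def by auto
  define a where "a = q mod r"
  define b where "b = q div r"
  define t' where "t' = t + int (a * s l)"
  have p1: "(C l t, C l t') \<in> drnn_edges d s ^^ a" using horiz l t'_def by simp
  have p2: "(C l t', C (Suc l) t') \<in> drnn_edges d s ^^ 1" using l unfolding relpow_1 edge_iff by blast
  have p3: "(C (Suc l) t', C d (t' + int (b * s (Suc l)))) \<in> drnn_edges d s ^^ ((d - Suc l) + cst d s (Suc l) b)"
    using Suc l by simp
  have "q = a + r * b" unfolding a_def b_def by simp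
  then have "t' + int (b * s (Suc l)) = t + int (q * s l)" unfolding t'_def st
    by (simp add: algebra_simps)
  moreover have "a + 1 + ((d - Suc l) + cst d s (Suc l) b) = (d - l) + cst d s l q"
    using l by (simp add: cst_step r_def[symmetric] a_def b_def)
  moreover have "(C l t, C d (t' + int (b * s (Suc l)))) \<in> drnn_edges d s ^^ (a + 1 + ((d - Suc l) + cst d s (Suc l) b))"
    using p1 p2 p3 unfolding relpow_add by blast
  ultimately show ?case by simp
qed

lemma rec_dist_eq:
  assumes adm: "admissible_dil d m s" and d1: "1 \<le> d"
  shows "rec_dist d s i n = d + cst d s 1 n"
proof -
  have s1: "s 1 = 1" using adm by (simp add: admissible_dil_def)
  have p0: "(X i, C 1 i) \<in> drnn_edges d s ^^ 1" unfolding relpow_1 edge_iff by blast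
  have "(C 1 i, C d (i + int (n * s 1))) \<in> drnn_edges d s ^^ ((d - 1) + cst d s 1 n)"
    using path[OF adm] d1 by simp
  then have "(X i, C d (i + int n)) \<in> drnn_edges d s ^^ (1 + ((d - 1) + cst d s 1 n))"
    using p0 s1 unfolding relpow_add by auto
  then have ex: "(X i, C d (i + int n)) \<in> drnn_edges d s ^^ (d + cst d s 1 n)" using d1 by simp
  have lb: "d + cst d s 1 n \<le> k" if "(X i, C d (i + int n)) \<in> drnn_edges d s ^^ k" for k
    using lower[OF adm d1 that] by (simp add: Dv_def)
  show ?thesis unfolding rec_dist_def by (rule Least_equality[where P="\<lambda>k. (X i, C d (i + int n)) \<in> drnn_edges d s ^^ k", OF ex lb])
qed


definition rr :: "(nat \<Rightarrow> nat) \<Rightarrow> nat \<Rightarrow> nat" where "rr s j = s (Suc j) div s j"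

lemma gauss2: "2 * (\<Sum>a<r. a) + r = r * (r::nat)"
  by (induction r) (auto simp: algebra_simps)

lemma cst_block: "l < d \<Longrightarrow> a < rr s l \<Longrightarrow> cst d s l (b * rr s l + a) = a + cst d s (Suc l) b"
  by (simp add: cst_step rr_def[symmetric])

lemma sum_formula:
  assumes adm: "admissible_dil d m s"
  shows "1 \<le> l \<Longrightarrow> l \<le> d \<Longrightarrow>
    2 * (\<Sum>q<(\<Prod>j\<in>{l..<d}. rr s j). cst d s l q) + (\<Prod>j\<in>{l..<d}. rr s j) * (d - l)
     = (\<Prod>j\<in>{l..<d}. rr s j) * (\<Sum>j\<in>{l..<d}. rr s j)"
proof (induction "d - l" arbitrary: l)
  case 0
  then have "l = d" by simp
  then show ?case by (simp add: cst_zero)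
next
  case (Suc n)
  then have l: "1 \<le> l" "l < d" by auto
  define r where "r = rr s l"
  have rpos: "r > 0" using adm_step[OF adm l] r_def rr_def by auto
  define P' where "P' = (\<Prod>j\<in>{Suc l..<d}. rr s j)"
  define R' where "R' = (\<Sum>j\<in>{Suc l..<d}. rr s j)"
  define S' where "S' = (\<Sum>q<P'. cst d s (Suc l) q)"
  have IH: "2 * S' + P' * (d - Suc l) = P' * R'" using Suc l unfolding S'_def P'_def R'_def by simp
  have P: "(\<Prod>j\<in>{l..<d}. rr s j) = r * P'" using l unfolding P'_def r_def by (simp add: prod.atLeast_Suc_lessThan)
  have R: "(\<Sum>j\<in>{l..<d}. rr s j) = r + R'" using l unfolding R'_def r_def by (simp add: sum.atLeast_Suc_lessThan)
  have "(\<Sum>q<r * P'. cst d s l q) = (\<Sum>b<P'. \<Sum>q\<in>{b*r..<b*r+r}. cst d s l q)"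
    using sum.nat_group[of "cst d s l" r P'] by (simp add: mult.commute)
  also have "\<dots> = (\<Sum>b<P'. \<Sum>a<r. a + cst d s (Suc l) b)"
  proof (rule sum.cong[OF refl])
    fix b
    have "(\<Sum>q\<in>{b*r..<b*r+r}. cst d s l q) = (\<Sum>a\<in>{0..<r}. cst d s l (a + b*r))"
      using sum.shift_bounds_nat_ivl[of "cst d s l" 0 "b*r" r] by (simp add: add.commute)
    also have "\<dots> = (\<Sum>a<r. a + cst d s (Suc l) b)"
      using cst_block[OF l(2)] r_def by (auto simp: atLeast0LessThan add.commute intro!: sum.cong)
    finally show "(\<Sum>q\<in>{b*r..<b*r+r}. cst d s l q) = (\<Sum>a<r. a + cst d s (Suc l) b)" .
  qed
  also have "\<dots> = P' * (\<Sum>a<r. a) + r * S'"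
    by (simp add: sum.distrib S'_def sum_distrib_left mult.commute)
  finally have S: "(\<Sum>q<r * P'. cst d s l q) = P' * (\<Sum>a<r. a) + r * S'" .
  have dl: "d - l = Suc (d - Suc l)" using l by simp
  have g: "2 * (\<Sum>a<r. a) + r = r * r" by (rule gauss2)
  have "2 * (P' * (\<Sum>a<r. a) + r * S') + r * P' * (d - l)
      = P' * (2 * (\<Sum>a<r. a) + r) + r * (2 * S' + P' * (d - Suc l))"
    unfolding dl by (simp add: algebra_simps)
  also have "\<dots> = r * P' * (r + R')" unfolding g IH by (simp add: algebra_simps)
  finally show ?case unfolding P R S .
qed

lemma prod_telescope:
  assumes adm: "admissible_dil d m s"
  shows "1 \<le> l \<Longrightarrow> l \<le> d \<Longrightarrow> s d = (\<Prod>j\<in>{l..<d}. rr s j) * s l"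
proof (induction "d - l" arbitrary: l)
  case 0 then show ?case by simp
next
  case (Suc n)
  then have l: "1 \<le> l" "l < d" by auto
  have "s (Suc l) = rr s l * s l" using adm_step[OF adm l] rr_def by simp
  moreover have "s d = (\<Prod>j\<in>{Suc l..<d}. rr s j) * s (Suc l)" using Suc l by simp
  ultimately show ?case using l by (simp add: prod.atLeast_Suc_lessThan)
qed

lemma cst_full:
  assumes adm: "admissible_dil d m s"
  shows "1 \<le> l \<Longrightarrow> l \<le> d \<Longrightarrow> cst d s l (\<Prod>j\<in>{l..<d}. rr s j) = 1"
proof (induction "d - l" arbitrary: l)
  case 0 then show ?case by (simp add: cst_top)
next
  case (Suc n)
  then have l: "1 \<le> l" "l < d" by auto
  have rpos: "rr s l > 0" using adm_step[OF adm l] rr_def by auto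
  have "cst d s (Suc l) (\<Prod>j\<in>{Suc l..<d}. rr s j) = 1" using Suc l by simp
  then show ?case using l rpos
    by (simp add: prod.atLeast_Suc_lessThan cst_step rr_def[symmetric])
qed

lemma amgm:
  fixes r :: "nat \<Rightarrow> nat"
  assumes "finite A" "\<And>j. j \<in> A \<Longrightarrow> r j > 0" "(\<Prod>j\<in>A. r j) = M ^ card A" "M > 0"
  shows "card A * M \<le> (\<Sum>j\<in>A. r j)"
proof -
  have "(\<Sum>j\<in>A. ln (real (r j) / M)) \<le> (\<Sum>j\<in>A. real (r j) / M - 1)"
    using assms by (intro sum_mono ln_le_minus_one) auto
  moreover have "(\<Sum>j\<in>A. ln (real (r j) / M)) = (\<Sum>j\<in>A. ln (real (r j))) - card A * ln M"
    using assms by (simp add: ln_div sum_subtractf)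
  moreover have "(\<Sum>j\<in>A. ln (real (r j))) = ln (\<Prod>j\<in>A. real (r j))"
    using assms by (subst ln_prod) auto
  moreover have "(\<Prod>j\<in>A. real (r j)) = real M ^ card A"
    using assms(3) by (metis of_nat_power of_nat_prod)
  moreover have "(\<Sum>j\<in>A. real (r j) / M - 1) = (\<Sum>j\<in>A. real (r j)) / M - card A"
    by (simp add: sum_subtractf sum_divide_distrib)
  ultimately have "0 \<le> (\<Sum>j\<in>A. real (r j)) / M - card A" by (simp add: ln_realpow)
  then have "real (card A) * M \<le> (\<Sum>j\<in>A. real (r j))" using assms(4)
    by (simp add: field_simps)
  then show ?thesis by (metis of_nat_le_iff of_nat_mult of_nat_sum)
qed


lemma mean_eq:
  assumes adm: "admissible_dil d m s" and d1: "1 \<le> d"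
  shows "mean_rec_len d s k = (1 / real k) * real (\<Sum>n\<in>{1..k}. d + cst d s 1 n)"
proof -
  have "\<And>n. (SUP i::int. rec_dist d s i n) = d + cst d s 1 n"
    using rec_dist_eq[OF adm d1] by simp
  then show ?thesis unfolding mean_rec_len_def by (simp add: of_nat_sum)
qed

lemma sum_total:
  assumes adm: "admissible_dil d m s" and d1: "1 \<le> d"
  shows "2 * (\<Sum>n\<in>{1..m}. cst d s 1 n) + m * (d - 1) = 2 + m * (\<Sum>j\<in>{1..<d}. rr s j)"
proof -
  have s1: "s 1 = 1" and sd: "s d = m" using adm by (auto simp: admissible_dil_def)
  have P: "(\<Prod>j\<in>{1..<d}. rr s j) = m" using prod_telescope[OF adm _ d1] s1 sd by simp
  have "(\<Sum>n\<in>{1..m}. cst d s 1 n) = (\<Sum>n\<in>{0..m}. cst d s 1 n)"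
    using sum_shift_lb_Suc0_0[of "cst d s 1" m] by (simp add: cst_zero)
  also have "\<dots> = (\<Sum>n<m. cst d s 1 n) + cst d s 1 m"
    by (simp add: atLeast0AtMost lessThan_Suc_atMost[symmetric])
  also have "cst d s 1 m = 1" using cst_full[OF adm _ d1] P by simp
  finally have e: "(\<Sum>n\<in>{1..m}. cst d s 1 n) = (\<Sum>n<m. cst d s 1 n) + 1" .
  show ?thesis using sum_formula[OF adm _ d1] P e by simp
qed

theorem theorem1:
  fixes M d :: nat
  assumes "M \<ge> 2" and "d \<ge> 2"
  shows "admissible_dil d (M ^ (d-1)) (\<lambda>i. M ^ (i-1)) \<and>
         (\<forall>s. admissible_dil d (M ^ (d-1)) s \<longrightarrow>
              mean_rec_len d (\<lambda>i. M ^ (i-1)) (M ^ (d-1)) \<le> mean_rec_len d s (M ^ (d-1)))"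
proof -
  let ?m = "M ^ (d-1)"
  let ?p = "\<lambda>i::nat. M ^ (i-1)"
  have d1: "1 \<le> d" using assms by simp
  have Mpos: "M > 0" using assms by simp
  have admp: "admissible_dil d ?m ?p"
    unfolding admissible_dil_def
  proof (intro conjI ballI)
    fix i assume i: "i \<in> {2..d}"
    then have ii: "i - 1 = Suc (i - 1 - 1)" by auto
    show "M ^ (i - 1 - 1) \<le> M ^ (i - 1)" using Mpos i by (intro power_increasing) auto
    show "\<exists>n>0. M ^ (i - 1) = n * M ^ (i - 1 - 1)" using Mpos by (subst ii) auto
  qed simp_all
  have rp: "rr ?p j = M" if "j \<in> {1..<d}" for j
  proof -
    have j: "j = Suc (j - 1)" using that by auto
    have "M ^ j = M * M ^ (j - 1)" by (subst j) simp
    then show ?thesis using Mpos by (simp add: rr_def)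
  qed
  have Sp: "(\<Sum>j\<in>{1..<d}. rr ?p j) = (d - 1) * M" using rp by simp
  show ?thesis
  proof (intro conjI allI impI admp)
    fix s assume adm: "admissible_dil d ?m s"
    have s1: "s 1 = 1" and sd: "s d = ?m" using adm by (auto simp: admissible_dil_def)
    have P: "(\<Prod>j\<in>{1..<d}. rr s j) = M ^ card {1..<d}" using prod_telescope[OF adm _ d1] s1 sd by simp
    have "card {1..<d} * M \<le> (\<Sum>j\<in>{1..<d}. rr s j)"
      by (rule amgm[OF _ _ P Mpos]) (use adm_step[OF adm] rr_def in auto)
    then have le: "(\<Sum>j\<in>{1..<d}. rr ?p j) \<le> (\<Sum>j\<in>{1..<d}. rr s j)" using Sp by simp
    have A: "2 * (\<Sum>n\<in>{1..?m}. cst d ?p 1 n) + ?m * (d - 1) = 2 + ?m * (\<Sum>j\<in>{1..<d}. rr ?p j)"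
      by (rule sum_total[OF admp d1])
    have B: "2 * (\<Sum>n\<in>{1..?m}. cst d s 1 n) + ?m * (d - 1) = 2 + ?m * (\<Sum>j\<in>{1..<d}. rr s j)"
      by (rule sum_total[OF adm d1])
    have "?m * (\<Sum>j\<in>{1..<d}. rr ?p j) \<le> ?m * (\<Sum>j\<in>{1..<d}. rr s j)" using le by simp
    then have "(\<Sum>n\<in>{1..?m}. cst d ?p 1 n) \<le> (\<Sum>n\<in>{1..?m}. cst d s 1 n)" using A B by linarith
    then have "(\<Sum>n\<in>{1..?m}. d + cst d ?p 1 n) \<le> (\<Sum>n\<in>{1..?m}. d + cst d s 1 n)"
      by (simp add: sum.distrib)
    then show "mean_rec_len d ?p ?m \<le> mean_rec_len d s ?m"
      unfolding mean_eq[OF admp d1] mean_eq[OF adm d1]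
      by (rule mult_left_mono[OF iffD2[OF of_nat_le_iff]]) auto
  qed
qed

end
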